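(* Let $E$ be a finite extension of $\mathbb{Q}_\ell$ with ring of integers $\mathcal{O}_E$, let $A=E\langle T_1,\ldots,T_b\rangle$ be the Tate algebra and $M=(T_1,\ldots,T_b)\subset A$. Let $\alpha_1,\ldots,\alpha_b\in\mathcal{O}_E$ and let $\sigma$ be the continuous $E$-algebra endomorphism of $A$ with $\sigma(T_j)=\alpha_jT_j$ for all $j$. Assume that $\underline{\alpha}^n:=\alpha_1^{n_1}\cdots\alpha_b^{n_b}\neq 1$ for all $n=(n_1,\ldots,n_b)\in\mathbb{N}^b\setminus\{0\}$. Let $I\subset A$ be an ideal with $\sigma(I)\subset I$ which is not contained in $M$. Then $I=A$.
   Context: The Tate algebra $E\langle T_1,\ldots,T_b\rangle$ is the ring of power series $\sum_{n\in\mathbb{N}^b}g^{(n)}\underline{T}^n$ with $g^{(n)}\in E$ and $|g^{(n)}|\to0$ as $|n|\to\infty$, where $|\cdot|$ is the $\ell$-adic absolute value. *)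

theory Defs
  imports "HOL-Computational_Algebra.Primes" "HOL-Algebra.Ideal" "HOL-Algebra.RingHom" Complex_Main
begin

definition nonarch_absval :: "('e::field \<Rightarrow> real) \<Rightarrow> bool" where
  "nonarch_absval av \<longleftrightarrow>
     (\<forall>x. 0 \<le> av x) \<and> (\<forall>x. av x = 0 \<longleftrightarrow> x = 0) \<and>
     (\<forall>x y. av (x * y) = av x * av y) \<and>
     (\<forall>x y. av (x + y) \<le> max (av x) (av y))"

definition absval_complete :: "('e::field \<Rightarrow> real) \<Rightarrow> bool" where
  "absval_complete av \<longleftrightarrow>
     (\<forall>x :: nat \<Rightarrow> 'e.
        (\<forall>\<epsilon>>0. \<exists>N. \<forall>m\<ge>N. \<forall>n\<ge>N. av (x m - x n) < \<epsilon>) \<longrightarrow>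
        (\<exists>L. \<forall>\<epsilon>>0. \<exists>N. \<forall>n\<ge>N. av (x n - L) < \<epsilon>))"

text \<open>A finite extension of Q_l, equipped with the (unique) extension of the l-adic
  absolute value, characterised intrinsically: a field with a complete, discretely
  valued non-archimedean absolute value with finite residue field, normalised by |l| = 1/l.\<close>
definition l_adic_local_field :: "nat \<Rightarrow> ('e::field \<Rightarrow> real) \<Rightarrow> bool" where
  "l_adic_local_field l av \<longleftrightarrow>
     prime l \<and> nonarch_absval av \<and> av (of_nat l) = 1 / real l \<and>
     absval_complete av \<and>
     (\<exists>\<pi>. 0 < av \<pi> \<and> av \<pi> < 1 \<and> (\<forall>x. x \<noteq> 0 \<longrightarrow> (\<exists>k::int. av x = av \<pi> powi k))) \<and>
     finite ({x. av x \<le> 1} // {(x, y). av (x - y) < 1})"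

text \<open>Multi-indices in N^b are functions nat \<Rightarrow> nat vanishing from b on.\<close>
definition multiidx :: "nat \<Rightarrow> (nat \<Rightarrow> nat) set" where
  "multiidx b = {n. \<forall>j\<ge>b. n j = 0}"

definition tate :: "('e::field \<Rightarrow> real) \<Rightarrow> nat \<Rightarrow> ((nat \<Rightarrow> nat) \<Rightarrow> 'e) set" where
  "tate av b = {g. (\<forall>n. n \<notin> multiidx b \<longrightarrow> g n = 0) \<and>
                   (\<forall>\<epsilon>>0. finite {n \<in> multiidx b. av (g n) \<ge> \<epsilon>})}"

definition tmult :: "nat \<Rightarrow> ((nat \<Rightarrow> nat) \<Rightarrow> 'e::field) \<Rightarrow> ((nat \<Rightarrow> nat) \<Rightarrow> 'e) \<Rightarrow> (nat \<Rightarrow> nat) \<Rightarrow> 'e" where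
  "tmult b f g n = (\<Sum>m \<in> {m \<in> multiidx b. \<forall>j. m j \<le> n j}. f m * g (\<lambda>j. n j - m j))"

definition tone :: "(nat \<Rightarrow> nat) \<Rightarrow> 'e::field" where
  "tone = (\<lambda>n. if n = (\<lambda>_. 0) then 1 else 0)"

definition tate_ring :: "('e::field \<Rightarrow> real) \<Rightarrow> nat \<Rightarrow> ((nat \<Rightarrow> nat) \<Rightarrow> 'e) ring" where
  "tate_ring av b = \<lparr>carrier = tate av b, mult = tmult b, one = tone,
                     zero = (\<lambda>_. 0), add = (\<lambda>f g n. f n + g n)\<rparr>"

definition Tvar :: "nat \<Rightarrow> (nat \<Rightarrow> nat) \<Rightarrow> 'e::field" where
  "Tvar j = (\<lambda>n. if n = (\<lambda>i. if i = j then 1 else 0) then 1 else 0)"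

definition gauss_norm :: "('e::field \<Rightarrow> real) \<Rightarrow> ((nat \<Rightarrow> nat) \<Rightarrow> 'e) \<Rightarrow> real" where
  "gauss_norm av g = (SUP n. av (g n))"

definition cont_E_alg_endo :: "('e::field \<Rightarrow> real) \<Rightarrow> nat \<Rightarrow> (((nat \<Rightarrow> nat) \<Rightarrow> 'e) \<Rightarrow> ((nat \<Rightarrow> nat) \<Rightarrow> 'e)) \<Rightarrow> bool" where
  "cont_E_alg_endo av b \<sigma> \<longleftrightarrow>
     \<sigma> \<in> ring_hom (tate_ring av b) (tate_ring av b) \<and>
     (\<forall>c. \<forall>g \<in> tate av b. \<sigma> (\<lambda>n. c * g n) = (\<lambda>n. c * \<sigma> g n)) \<and>
     (\<forall>g \<in> tate av b. \<forall>\<epsilon>>0. \<exists>\<delta>>0. \<forall>h \<in> tate av b.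
        gauss_norm av (\<lambda>n. h n - g n) < \<delta> \<longrightarrow> gauss_norm av (\<lambda>n. \<sigma> h n - \<sigma> g n) < \<epsilon>)"

end

theory Submission
  imports Defs
begin



lemma av_basic:
  assumes "nonarch_absval av"
  shows av_nonneg: "0 \<le> av x" and av_zero_iff: "av x = 0 \<longleftrightarrow> x = 0"
    and av_mult: "av (x * y) = av x * av y" and av_add: "av (x + y) \<le> max (av x) (av y)"
  using assms unfolding nonarch_absval_def by auto

lemma av_one: assumes "nonarch_absval av" shows "av 1 = 1"
proof -
  have "av 1 = av 1 * av 1" using av_mult[OF assms, of 1 1] by simp
  moreover have "av 1 \<noteq> 0" using av_zero_iff[OF assms, of 1] by simp
  ultimately show ?thesis by simp
qed

lemma av_zero: assumes "nonarch_absval av" shows "av 0 = 0"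
  using av_zero_iff[OF assms] by simp

lemma av_minus_one: assumes "nonarch_absval av" shows "av (-1) = 1"
proof -
  have "av (-1) * av (-1) = 1" using av_mult[OF assms, of "-1" "-1"] av_one[OF assms] by simp
  moreover have "av (-1) \<ge> 0" using av_nonneg[OF assms] by simp
  ultimately show ?thesis by (metis abs_of_nonneg abs_square_eq_1 power2_eq_square)
qed

lemma av_uminus: assumes "nonarch_absval av" shows "av (- x) = av x"
  using av_mult[OF assms, of "-1" x] av_minus_one[OF assms] by simp

lemma av_diff: assumes "nonarch_absval av" shows "av (x - y) \<le> max (av x) (av y)"
  using av_add[OF assms, of x "-y"] av_uminus[OF assms, of y] by simp

lemma av_diff_comm: assumes "nonarch_absval av" shows "av (x - y) = av (y - x)"
  using av_uminus[OF assms, of "x - y"] by simp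

lemma av_power: assumes "nonarch_absval av" shows "av (x ^ k) = av x ^ k"
  by (induction k) (simp_all add: av_one[OF assms] av_mult[OF assms])

lemma av_inverse: assumes "nonarch_absval av" "x \<noteq> 0" shows "av (inverse x) = 1 / av x"
proof -
  have "av x * av (inverse x) = 1" using av_mult[OF assms(1), of x "inverse x"] assms av_one[OF assms(1)] by simp
  moreover have "av x \<noteq> 0" using assms av_zero_iff by blast
  ultimately show ?thesis by (simp add: field_simps)
qed

lemma av_sum_le:
  assumes "nonarch_absval av" "0 \<le> K" "\<And>a. a \<in> A \<Longrightarrow> av (f a) \<le> K"
  shows "av (sum f A) \<le> K"
  using assms(3)
proof (induction A rule: infinite_finite_induct)
  case (infinite A) then show ?case using assms(2) av_zero[OF assms(1)] by simp
next
  case empty then show ?case using assms(2) av_zero[OF assms(1)] by simp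
next
  case (insert x F)
  have "av (f x) \<le> K" "av (sum f F) \<le> K" using insert by auto
  then show ?case using av_add[OF assms(1), of "f x" "sum f F"] insert(1,2) by simp
qed

lemma av_strict:
  assumes "nonarch_absval av" "av w < av z" shows "av (z + w) = av z"
proof -
  have "av z = av ((z + w) + (- w))" by simp
  also have "\<dots> \<le> max (av (z + w)) (av w)" using av_add[OF assms(1)] av_uminus[OF assms(1)] by metis
  finally have "av z \<le> av (z + w)" using assms(2) by auto
  moreover have "av (z + w) \<le> av z" using av_add[OF assms(1), of z w] assms(2) by auto
  ultimately show ?thesis by simp
qed

lemma av_one_minus:
  assumes "nonarch_absval av" "av w < 1" shows "av (1 - w) = 1"
  using av_strict[OF assms(1), of "-w" 1] assms av_uminus[OF assms(1)] av_one[OF assms(1)] by simp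




definition mon :: "(nat \<Rightarrow> nat) \<Rightarrow> (nat \<Rightarrow> nat) \<Rightarrow> 'e::field" where
  "mon n = (\<lambda>k. if k = n then 1 else 0)"

definition ej :: "nat \<Rightarrow> nat \<Rightarrow> nat" where
  "ej j = (\<lambda>i. if i = j then 1 else 0)"

definition cst :: "'e::field \<Rightarrow> (nat \<Rightarrow> nat) \<Rightarrow> 'e" where
  "cst c = (\<lambda>n. if n = (\<lambda>_. 0) then c else 0)"

definition apow :: "(nat \<Rightarrow> 'e::field) \<Rightarrow> nat \<Rightarrow> (nat \<Rightarrow> nat) \<Rightarrow> 'e" where
  "apow \<alpha> b n = (\<Prod>j<b. \<alpha> j ^ n j)"

lemma fin_le: "finite {m \<in> multiidx b. \<forall>j. m j \<le> k j}"
proof -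
  let ?A = "{m \<in> multiidx b. \<forall>j. m j \<le> k j}"
  have "inj_on (\<lambda>m. restrict m {..<b}) ?A"
  proof (rule inj_onI)
    fix x y assume "x \<in> ?A" "y \<in> ?A" "restrict x {..<b} = restrict y {..<b}"
    then show "x = y" unfolding multiidx_def
      by (auto simp: fun_eq_iff) (metis lessThan_iff not_le_imp_less restrict_apply')
  qed
  moreover have "(\<lambda>m. restrict m {..<b}) ` ?A \<subseteq> PiE {..<b} (\<lambda>j. {..k j})"
    by (auto simp: PiE_def extensional_def)
  moreover have "finite (PiE {..<b} (\<lambda>j. {..k j}))" by (rule finite_PiE) auto
  ultimately have "finite ((\<lambda>m. restrict m {..<b}) ` ?A)" using finite_subset by blast
  then show ?thesis using finite_imageD \<open>inj_on _ ?A\<close> by blast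
qed

lemma zero_multiidx[simp]: "(\<lambda>_. 0) \<in> multiidx b"
  by (simp add: multiidx_def)

lemma ej_multiidx: "j < b \<Longrightarrow> ej j \<in> multiidx b"
  by (simp add: multiidx_def ej_def)

lemma finsupp_tate:
  assumes av: "nonarch_absval av" and "finite S" "S \<subseteq> multiidx b" "\<And>n. n \<notin> S \<Longrightarrow> g n = 0"
  shows "g \<in> tate av b"
  unfolding tate_def
proof (safe)
  fix n assume "n \<notin> multiidx b" then show "g n = 0" using assms by auto
next
  fix \<epsilon> :: real assume "\<epsilon> > 0"
  have "{n \<in> multiidx b. \<epsilon> \<le> av (g n)} \<subseteq> S"
    using assms \<open>\<epsilon> > 0\<close> av_zero[OF av] by force
  then show "finite {n \<in> multiidx b. \<epsilon> \<le> av (g n)}" using assms(2) finite_subset by blast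
qed

lemma tate_bounded:
  assumes av: "nonarch_absval av" and g: "g \<in> tate av b"
  shows "\<exists>B\<ge>1. \<forall>n. av (g n) \<le> B"
proof -
  let ?S = "{n \<in> multiidx b. 1 \<le> av (g n)}"
  have fin: "finite ?S" using g unfolding tate_def by auto
  define B where "B = Max (insert 1 ((\<lambda>n. av (g n)) ` ?S))"
  have "\<forall>n. av (g n) \<le> B"
  proof
    fix n
    show "av (g n) \<le> B"
    proof (cases "n \<in> ?S")
      case True then show ?thesis unfolding B_def using fin by (intro Max_ge) auto
    next
      case False
      then have "av (g n) < 1"
        using g av_zero[OF av] unfolding tate_def by (cases "n \<in> multiidx b") auto
      moreover have "1 \<le> B" unfolding B_def using fin by (intro Max_ge) auto
      ultimately show ?thesis by simp
    qed
  qed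
  moreover have "1 \<le> B" unfolding B_def using fin by (intro Max_ge) auto
  ultimately show ?thesis by blast
qed

lemma mon_tate: "nonarch_absval av \<Longrightarrow> n \<in> multiidx b \<Longrightarrow> mon n \<in> tate av b"
  by (rule finsupp_tate[of _ "{n}"]) (auto simp: mon_def)

lemma scaled_tate:
  assumes av: "nonarch_absval av" and g: "g \<in> tate av b"
  shows "(\<lambda>n. c * g n) \<in> tate av b"
proof (cases "c = 0")
  case True then show ?thesis using finsupp_tate[OF av, of "{}"] by auto
next
  case False
  have "av c > 0" using False av_zero_iff[OF av] av_nonneg[OF av] by (metis less_eq_real_def)
  show ?thesis unfolding tate_def
  proof (safe)
    fix n assume "n \<notin> multiidx b" then show "c * g n = 0" using g unfolding tate_def by auto
  next
    fix \<epsilon> :: real assume "\<epsilon> > 0"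
    have "{n \<in> multiidx b. \<epsilon> \<le> av (c * g n)} = {n \<in> multiidx b. \<epsilon> / av c \<le> av (g n)}"
      using \<open>av c > 0\<close> by (auto simp: av_mult[OF av] field_simps)
    moreover have "finite {n \<in> multiidx b. \<epsilon> / av c \<le> av (g n)}"
      using g \<open>\<epsilon> > 0\<close> \<open>av c > 0\<close> unfolding tate_def by auto
    ultimately show "finite {n \<in> multiidx b. \<epsilon> \<le> av (c * g n)}" by simp
  qed
qed

lemma cst_tate: "nonarch_absval av \<Longrightarrow> cst c \<in> tate av b"
  by (rule finsupp_tate[of _ "{\<lambda>_. 0}"]) (auto simp: cst_def)

lemma sum_delta_fun:
  assumes "finite A"
  shows "(\<Sum>m\<in>A. (if m = a then F m else 0)) = (if a \<in> A then F a else (0::'a::comm_monoid_add))"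
  using assms by (simp add: sum.delta')

lemma tmult_cst: "tmult b (cst c) g = (\<lambda>n. c * g n)"
proof
  fix n
  have "tmult b (cst c) g n = (\<Sum>m\<in>{m \<in> multiidx b. \<forall>j. m j \<le> n j}. (if m = (\<lambda>_. 0) then c * g (\<lambda>j. n j - m j) else 0))"
    unfolding tmult_def cst_def by (intro sum.cong) auto
  also have "\<dots> = c * g n" using fin_le by (subst sum_delta_fun) auto
  finally show "tmult b (cst c) g n = c * g n" .
qed

lemma tmult_mon:
  assumes "m \<in> multiidx b" "n \<in> multiidx b"
  shows "tmult b (\<lambda>k. a * mon m k) (\<lambda>k. c * mon n k) = (\<lambda>k. (a * c) * mon (\<lambda>i. m i + n i) k)"
proof
  fix k
  have "tmult b (\<lambda>k. a * mon m k) (\<lambda>k. c * mon n k) k =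
     (\<Sum>m'\<in>{m' \<in> multiidx b. \<forall>j. m' j \<le> k j}. (if m' = m then a * (c * mon n (\<lambda>j. k j - m' j)) else 0))"
    unfolding tmult_def by (intro sum.cong) (auto simp: mon_def)
  also have "\<dots> = (if m \<in> {m' \<in> multiidx b. \<forall>j. m' j \<le> k j} then a * (c * mon n (\<lambda>j. k j - m j)) else 0)"
    using fin_le by (subst sum_delta_fun) auto
  also have "\<dots> = (a * c) * mon (\<lambda>i. m i + n i) k"
  proof (cases "\<forall>j. m j \<le> k j")
    case True
    have "((\<lambda>j. k j - m j) = n) \<longleftrightarrow> (k = (\<lambda>i. m i + n i))"
      using True by (auto simp: fun_eq_iff) (metis add_diff_cancel_left' le_add_diff_inverse)+
    then show ?thesis using True assms by (auto simp: mon_def)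
  next
    case False
    then have "k \<noteq> (\<lambda>i. m i + n i)" by auto
    then show ?thesis using False by (auto simp: mon_def)
  qed
  finally show "tmult b (\<lambda>k. a * mon m k) (\<lambda>k. c * mon n k) k = (a * c) * mon (\<lambda>i. m i + n i) k" .
qed

lemma mon_zero_tone: "mon (\<lambda>_. 0) = tone"
  by (simp add: mon_def tone_def)

lemma Tvar_mon: "Tvar j = mon (ej j)"
  by (simp add: Tvar_def mon_def ej_def)

lemma apow_zero: "apow \<alpha> b (\<lambda>_. 0) = 1"
  by (simp add: apow_def)

lemma apow_add: "apow \<alpha> b (\<lambda>i. m i + n i) = apow \<alpha> b m * apow \<alpha> b n"
  by (simp add: apow_def power_add prod.distrib)

lemma apow_ej: "j < b \<Longrightarrow> apow \<alpha> b (ej j) = \<alpha> j"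
proof -
  assume "j < b"
  have "apow \<alpha> b (ej j) = (\<Prod>i<b. if i = j then \<alpha> i else 1)"
    unfolding apow_def ej_def by (intro prod.cong) auto
  also have "\<dots> = \<alpha> j" using \<open>j < b\<close> by (simp add: prod.delta)
  finally show ?thesis .
qed

lemma apow_int:
  assumes av: "nonarch_absval av" and a: "\<forall>j<b. av (\<alpha> j) \<le> 1"
  shows "av (apow \<alpha> b n) \<le> 1"
proof -
  have h: "av (\<alpha> j ^ n j) \<le> 1" if "j < b" for j
    using a that by (simp add: av_power[OF av] power_le_one av_nonneg[OF av])
  then have "\<forall>c\<le>b. av (\<Prod>j<c. \<alpha> j ^ n j) \<le> 1"
  proof (intro allI impI)
    fix c assume "c \<le> b"
    then show "av (\<Prod>j<c. \<alpha> j ^ n j) \<le> 1"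
    proof (induction c)
      case 0 then show ?case by (simp add: av_one[OF av])
    next
      case (Suc c)
      then have "av (\<alpha> c ^ n c) \<le> 1" "av (\<Prod>j<c. \<alpha> j ^ n j) \<le> 1" using h by auto
      then show ?case by (simp add: av_mult[OF av] mult_le_one av_nonneg[OF av])
    qed
  qed
  then show ?thesis unfolding apow_def by simp
qed




lemma tr_simps[simp]:
  "carrier (tate_ring av b) = tate av b"
  "mult (tate_ring av b) = tmult b"
  "one (tate_ring av b) = tone"
  "zero (tate_ring av b) = (\<lambda>_. 0)"
  "add (tate_ring av b) = (\<lambda>f g n. f n + g n)"
  by (simp_all add: tate_ring_def)

context
  fixes av :: "'e::field \<Rightarrow> real" and b :: nat and \<alpha> :: "nat \<Rightarrow> 'e" and \<sigma>
  assumes av: "nonarch_absval av"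
    and R: "ring (tate_ring av b)"
    and sigma: "cont_E_alg_endo av b \<sigma>"
    and sigma_T: "\<forall>j<b. \<sigma> (Tvar j) = (\<lambda>n. \<alpha> j * Tvar j n)"
    and a_int: "\<forall>j<b. av (\<alpha> j) \<le> 1"
begin

lemma gauss_le: "(\<And>n. av (h n) \<le> K) \<Longrightarrow> gauss_norm av h \<le> K"
  unfolding gauss_norm_def by (rule cSUP_least) auto

lemma gauss_ge: "bdd_above (range (\<lambda>n. av (h n))) \<Longrightarrow> av (h n) \<le> gauss_norm av h"
  unfolding gauss_norm_def by (rule cSUP_upper) auto

lemma sig_hom: "\<sigma> \<in> ring_hom (tate_ring av b) (tate_ring av b)"
  using sigma unfolding cont_E_alg_endo_def by simp

lemma sig_lin: "g \<in> tate av b \<Longrightarrow> \<sigma> (\<lambda>n. c * g n) = (\<lambda>n. c * \<sigma> g n)"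
  using sigma unfolding cont_E_alg_endo_def by simp

lemma sig_closed: "g \<in> tate av b \<Longrightarrow> \<sigma> g \<in> tate av b"
  using ring_hom_closed[OF sig_hom] by simp

lemma sig_add: "f \<in> tate av b \<Longrightarrow> g \<in> tate av b \<Longrightarrow> \<sigma> (\<lambda>n. f n + g n) = (\<lambda>n. \<sigma> f n + \<sigma> g n)"
  using ring_hom_add[OF sig_hom, of f g] by simp

lemma sig_mult: "f \<in> tate av b \<Longrightarrow> g \<in> tate av b \<Longrightarrow> \<sigma> (tmult b f g) = tmult b (\<sigma> f) (\<sigma> g)"
  using ring_hom_mult[OF sig_hom, of f g] by simp

lemma sig_one: "\<sigma> tone = tone"
  using ring_hom_one[OF sig_hom] by simp

lemma sig_zero: "\<sigma> (\<lambda>_. 0) = (\<lambda>_. 0)"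
  using ring_hom_zero[OF sig_hom R R] by simp

lemma sig_mon_aux:
  "\<forall>n. n \<in> multiidx b \<longrightarrow> (\<Sum>i<b. n i) = d \<longrightarrow> \<sigma> (mon n) = (\<lambda>k. apow \<alpha> b n * mon n k)"
proof (induction d)
  case 0
  show ?case
  proof (intro allI impI)
    fix n :: "nat \<Rightarrow> nat" assume n: "n \<in> multiidx b" "(\<Sum>i<b. n i) = 0"
    then have "n = (\<lambda>_. 0)" unfolding multiidx_def by (auto simp: fun_eq_iff) (metis lessThan_iff not_le)
    then show "\<sigma> (mon n) = (\<lambda>k. apow \<alpha> b n * mon n k)"
      using sig_one by (simp add: mon_zero_tone apow_zero)
  qed
next
  case (Suc d)
  show ?case
  proof (intro allI impI)
    fix n :: "nat \<Rightarrow> nat" assume n: "n \<in> multiidx b" "(\<Sum>i<b. n i) = Suc d"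
    then obtain j where j: "j < b" "n j > 0" by (metis (mono_tags) lessThan_iff neq0_conv sum.neutral nat.distinct(1))
    define n' where "n' = (\<lambda>i. n i - ej j i)"
    have n'm: "n' \<in> multiidx b" using n(1) unfolding n'_def multiidx_def by auto
    have nn': "n = (\<lambda>i. ej j i + n' i)" using j unfolding n'_def ej_def by (auto simp: fun_eq_iff)
    have "(\<Sum>i<b. n i) = (\<Sum>i<b. ej j i) + (\<Sum>i<b. n' i)"
      by (subst nn') (simp add: sum.distrib)
    moreover have "(\<Sum>i<b. ej j i) = 1" using j unfolding ej_def by (simp add: sum.delta)
    ultimately have sd: "(\<Sum>i<b. n' i) = d" using n(2) by simp
    have IH: "\<sigma> (mon n') = (\<lambda>k. apow \<alpha> b n' * mon n' k)" using Suc n'm sd by blast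
    have mm: "(mon n :: (nat \<Rightarrow> nat) \<Rightarrow> 'e) = tmult b (mon (ej j)) (mon n')"
      using tmult_mon[OF ej_multiidx[OF j(1)] n'm, of "1::'e" "1::'e"] nn' by simp
    have "\<sigma> (mon n) = tmult b (\<sigma> (mon (ej j))) (\<sigma> (mon n'))"
      using mm sig_mult mon_tate[OF av] ej_multiidx[OF j(1)] n'm by simp
    also have "\<dots> = tmult b (\<lambda>k. \<alpha> j * mon (ej j) k) (\<lambda>k. apow \<alpha> b n' * mon n' k)"
      using sigma_T j IH by (simp add: Tvar_mon)
    also have "\<dots> = (\<lambda>k. (\<alpha> j * apow \<alpha> b n') * mon n k)"
      using tmult_mon[OF ej_multiidx[OF j(1)] n'm] nn' by simp
    also have "\<alpha> j * apow \<alpha> b n' = apow \<alpha> b n"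
      using nn' apow_add[of \<alpha> b "ej j" n'] apow_ej[OF j(1), of \<alpha>] by simp
    finally show "\<sigma> (mon n) = (\<lambda>k. apow \<alpha> b n * mon n k)" .
  qed
qed

lemma sig_mon: "n \<in> multiidx b \<Longrightarrow> \<sigma> (mon n) = (\<lambda>k. apow \<alpha> b k * mon n k)"
proof -
  assume n: "n \<in> multiidx b"
  have "\<sigma> (mon n) = (\<lambda>k. apow \<alpha> b n * mon n k)" using sig_mon_aux n by blast
  also have "\<dots> = (\<lambda>k. apow \<alpha> b k * mon n k)" by (auto simp: mon_def)
  finally show ?thesis .
qed

lemma sig_finsupp:
  assumes "finite S" "S \<subseteq> multiidx b" "\<And>n. n \<notin> S \<Longrightarrow> g n = 0"
  shows "\<sigma> g = (\<lambda>k. apow \<alpha> b k * g k)"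
  using assms
proof (induction S arbitrary: g rule: finite_induct)
  case empty
  then have "g = (\<lambda>_. 0)" by auto
  then show ?case using sig_zero by simp
next
  case (insert a S)
  define g' where "g' = g(a := 0)"
  have g'S: "\<And>n. n \<notin> S \<Longrightarrow> g' n = 0" using insert unfolding g'_def by auto
  have g't: "g' \<in> tate av b" using finsupp_tate[OF av insert(1) _ g'S] insert(4) by auto
  have am: "a \<in> multiidx b" using insert by auto
  have ct: "(\<lambda>n. g a * mon a n) \<in> tate av b" using scaled_tate[OF av mon_tate[OF av am]] .
  have gg: "g = (\<lambda>n. g' n + g a * mon a n)" unfolding g'_def mon_def by (rule ext) auto
  have "\<sigma> g = (\<lambda>n. \<sigma> g' n + \<sigma> (\<lambda>n. g a * mon a n) n)"
    by (subst gg) (rule sig_add[OF g't ct])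
  also have "\<dots> = (\<lambda>n. apow \<alpha> b n * g' n + g a * (apow \<alpha> b n * mon a n))"
    using insert(3)[OF _ g'S] insert(4) sig_lin[OF mon_tate[OF av am]] sig_mon[OF am] by simp
  also have "\<dots> = (\<lambda>k. apow \<alpha> b k * g k)"
  proof
    fix k
    have gk: "g k = g' k + g a * mon a k" unfolding g'_def mon_def by auto
    show "apow \<alpha> b k * g' k + g a * (apow \<alpha> b k * mon a k) = apow \<alpha> b k * g k"
      by (simp only: gk) (simp add: algebra_simps)
  qed
  finally show ?case .
qed

lemma sig_diag:
  assumes g: "g \<in> tate av b"
  shows "\<sigma> g = (\<lambda>k. apow \<alpha> b k * g k)"
proof
  fix n0
  let ?d = "\<sigma> g n0 - apow \<alpha> b n0 * g n0"
  have cont: "\<forall>\<epsilon>>0. \<exists>\<delta>>0. \<forall>h \<in> tate av b.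
        gauss_norm av (\<lambda>n. h n - g n) < \<delta> \<longrightarrow> gauss_norm av (\<lambda>n. \<sigma> h n - \<sigma> g n) < \<epsilon>"
    using sigma g unfolding cont_E_alg_endo_def by blast
  have small: "av ?d < \<epsilon>" if "\<epsilon> > 0" for \<epsilon>
  proof -
    obtain \<delta> where \<delta>: "\<delta> > 0" "\<forall>h \<in> tate av b.
        gauss_norm av (\<lambda>n. h n - g n) < \<delta> \<longrightarrow> gauss_norm av (\<lambda>n. \<sigma> h n - \<sigma> g n) < \<epsilon>"
      using cont \<open>\<epsilon> > 0\<close> by blast
    define \<eta> where "\<eta> = min (\<delta>/2) (\<epsilon>/2)"
    have \<eta>: "\<eta> > 0" "\<eta> < \<delta>" "\<eta> < \<epsilon>" using \<delta> \<open>\<epsilon> > 0\<close> unfolding \<eta>_def by auto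
    define S where "S = {n \<in> multiidx b. \<eta> \<le> av (g n)}"
    define h where "h = (\<lambda>n. if \<eta> \<le> av (g n) then g n else 0)"
    have finS: "finite S" using g \<eta> unfolding S_def tate_def by auto
    have hS: "h n = 0" if "n \<notin> S" for n
      using that g unfolding h_def S_def tate_def by auto
    have ht: "h \<in> tate av b" using finsupp_tate[OF av finS _ hS] unfolding S_def by auto
    have sh: "\<sigma> h = (\<lambda>k. apow \<alpha> b k * h k)" using sig_finsupp[OF finS _ hS] unfolding S_def by auto
    have hg: "av (h n - g n) < \<eta>" for n
      unfolding h_def using \<eta> by (auto simp: av_zero[OF av] av_uminus[OF av])
    have "gauss_norm av (\<lambda>n. h n - g n) \<le> \<eta>" by (rule gauss_le) (use hg in \<open>auto intro: less_imp_le\<close>)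
    then have "gauss_norm av (\<lambda>n. \<sigma> h n - \<sigma> g n) < \<epsilon>" using \<delta>(2) ht \<eta> by auto
    moreover have "bdd_above (range (\<lambda>n. av (\<sigma> h n - \<sigma> g n)))"
    proof -
      obtain B1 where B1: "\<forall>n. av (\<sigma> h n) \<le> B1" using tate_bounded[OF av sig_closed[OF ht]] by blast
      obtain B2 where B2: "\<forall>n. av (\<sigma> g n) \<le> B2" using tate_bounded[OF av sig_closed[OF g]] by blast
      have "av (\<sigma> h n - \<sigma> g n) \<le> max B1 B2" for n
        using av_diff[OF av, of "\<sigma> h n" "\<sigma> g n"] B1 B2 by (smt (verit))
      then show ?thesis by (intro bdd_aboveI2) 
    qed
    ultimately have a1: "av (\<sigma> h n0 - \<sigma> g n0) < \<epsilon>"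
      using gauss_ge[of "\<lambda>n. \<sigma> h n - \<sigma> g n" n0] by simp
    have "av (apow \<alpha> b n0 * (h n0 - g n0)) \<le> av (h n0 - g n0)"
      using apow_int[OF av a_int, of n0] av_nonneg[OF av, of "h n0 - g n0"]
      by (simp add: av_mult[OF av] mult_left_le_one_le av_nonneg[OF av])
    then have a2: "av (apow \<alpha> b n0 * (h n0 - g n0)) < \<epsilon>" using hg[of n0] \<eta> by simp
    have "?d = - (\<sigma> h n0 - \<sigma> g n0) + apow \<alpha> b n0 * (h n0 - g n0)"
      using sh by (simp add: algebra_simps)
    then have "av ?d \<le> max (av (\<sigma> h n0 - \<sigma> g n0)) (av (apow \<alpha> b n0 * (h n0 - g n0)))"
      using av_add[OF av] av_uminus[OF av] by metis
    then show ?thesis using a1 a2 by simp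
  qed
  have "av ?d \<le> 0"
  proof (rule ccontr)
    assume "\<not> av ?d \<le> 0"
    then show False using small[of "av ?d"] by simp
  qed
  then have "?d = 0" using av_nonneg[OF av, of ?d] av_zero_iff[OF av] by simp
  then show "\<sigma> g n0 = apow \<alpha> b n0 * g n0" by simp
qed

end



inductive pf :: "('e::field \<Rightarrow> 'e) \<Rightarrow> bool" where
  pf_const: "pf (\<lambda>x. c)"
| pf_id: "pf (\<lambda>x. x)"
| pf_add: "pf p \<Longrightarrow> pf q \<Longrightarrow> pf (\<lambda>x. p x + q x)"
| pf_mult: "pf p \<Longrightarrow> pf q \<Longrightarrow> pf (\<lambda>x. p x * q x)"

lemma pf_comp: "pf p \<Longrightarrow> pf q \<Longrightarrow> pf (\<lambda>x. p (q x))"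
  by (induction p rule: pf.induct) (auto intro: pf.intros)

lemma pf_diff: "pf p \<Longrightarrow> pf q \<Longrightarrow> pf (\<lambda>x. p x - q x)"
proof -
  assume "pf p" "pf q"
  then have "pf (\<lambda>x. p x + (-1) * q x)" by (intro pf.intros)
  then show ?thesis by simp
qed

lemma pf_power: "pf p \<Longrightarrow> pf (\<lambda>x. p x ^ k)"
  by (induction k) (auto intro: pf.intros)

lemma pf_good:
  assumes av: "nonarch_absval av"
    and I: "ideal I (tate_ring av b)"
    and stable: "\<sigma> ` I \<subseteq> I"
    and diag: "\<forall>g \<in> tate av b. \<sigma> g = (\<lambda>k. apow \<alpha> b k * g k)"
    and p: "pf p"
  shows "g \<in> I \<Longrightarrow> (\<lambda>n. p (apow \<alpha> b n) * g n) \<in> I"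
  using p
proof (induction p arbitrary: g rule: pf.induct)
  case (pf_const c)
  have "cst c \<in> carrier (tate_ring av b)" using cst_tate[OF av] by simp
  then have "mult (tate_ring av b) (cst c) g \<in> I" using ideal.I_l_closed[OF I pf_const] by blast
  then show ?case by (simp add: tmult_cst)
next
  case pf_id
  have "g \<in> tate av b" using pf_id additive_subgroup.a_subset[OF ideal.axioms(1)[OF I]] by auto
  then show ?case using diag stable pf_id by force
next
  case (pf_add p q)
  have "(add (tate_ring av b)) (\<lambda>n. p (apow \<alpha> b n) * g n) (\<lambda>n. q (apow \<alpha> b n) * g n) \<in> I"
    using pf_add additive_subgroup.a_closed[OF ideal.axioms(1)[OF I]] by blast
  then show ?case by (simp add: algebra_simps)
next
  case (pf_mult p q)
  have "(\<lambda>n. p (apow \<alpha> b n) * (\<lambda>n. q (apow \<alpha> b n) * g n) n) \<in> I"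
    using pf_mult by blast
  then show ?case by (simp add: algebra_simps)
qed




definition phi :: "nat \<Rightarrow> 'e::field \<Rightarrow> 'e \<Rightarrow> 'e" where
  "phi N p y = (y ^ (N + 1) - y) * inverse p"

definition psi :: "nat \<Rightarrow> 'e::field \<Rightarrow> 'e" where
  "psi N z = 1 - z ^ N"

fun Dfun :: "nat \<Rightarrow> 'e::field \<Rightarrow> nat \<Rightarrow> 'e \<Rightarrow> 'e" where
  "Dfun N p 0 y = 1"
| "Dfun N p (Suc s) y = psi N y * Dfun N p s (phi N p y)"

lemma pf_D: "pf (Dfun N p s)"
proof (induction s)
  case 0 then show ?case using pf_const[of 1] by simp
next
  case (Suc s)
  have "pf (phi N p)" unfolding phi_def
    by (intro pf_mult pf_diff pf_power pf_id pf_const)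
  then have "pf (\<lambda>y. Dfun N p s (phi N p y))" using pf_comp[OF Suc] by simp
  moreover have "pf (psi N)" unfolding psi_def by (intro pf_diff pf_power pf_id pf_const)
  ultimately have "pf (\<lambda>y. psi N y * Dfun N p s (phi N p y))" by (intro pf_mult)
  then show ?case by simp
qed

lemma D_zero: "N \<ge> 1 \<Longrightarrow> Dfun N p s 0 = 1"
  by (induction s) (auto simp: psi_def phi_def zero_power)

context
  fixes av :: "'e::field \<Rightarrow> real" and N :: nat and p :: 'e
  assumes av: "nonarch_absval av"
    and N: "N \<ge> 1"
    and p: "0 < av p" "av p < 1"
    and disc: "\<And>x. av x < 1 \<Longrightarrow> av x \<le> av p"
    and ferm: "\<And>z. av z = 1 \<Longrightarrow> av (z ^ N - 1) < 1"
begin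

lemma p_nz: "p \<noteq> 0" using p av_zero[OF av] by auto

lemma phi_small: "av y < 1 \<Longrightarrow> av (phi N p y) = av y / av p"
proof -
  assume y: "av y < 1"
  have "av (y ^ N) < 1"
  proof -
    have "av y ^ N \<le> av y" using y N av_nonneg[OF av, of y]
      by (metis less_eq_real_def power_decreasing power_one_right)
    then show ?thesis using y by (simp add: av_power[OF av])
  qed
  then have a1: "av (1 - y ^ N) = 1" by (rule av_one_minus[OF av])
  have "y ^ (N + 1) - y = - (y * (1 - y ^ N))" by (simp add: algebra_simps)
  then have "av (y ^ (N + 1) - y) = av y"
    using a1 by (simp add: av_uminus[OF av] av_mult[OF av])
  then show ?thesis unfolding phi_def using p_nz
    by (simp add: av_mult[OF av] av_inverse[OF av])
qed

lemma phi_int: "av y \<le> 1 \<Longrightarrow> av (phi N p y) \<le> 1"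
proof -
  assume y: "av y \<le> 1"
  show ?thesis
  proof (cases "av y < 1")
    case True
    then show ?thesis using phi_small disc[OF True] p by simp
  next
    case False
    then have y1: "av y = 1" using y by simp
    have "y ^ (N + 1) - y = y * (y ^ N - 1)" by (simp add: algebra_simps)
    then have "av (y ^ (N + 1) - y) = av (y ^ N - 1)" using y1 by (simp add: av_mult[OF av])
    then have "av (y ^ (N + 1) - y) \<le> av p" using disc ferm[OF y1] by simp
    then show ?thesis unfolding phi_def using p_nz p
      by (simp add: av_mult[OF av] av_inverse[OF av])
  qed
qed

lemma psi_int: "av z \<le> 1 \<Longrightarrow> av (psi N z) \<le> 1"
  unfolding psi_def using av_diff[OF av, of 1 "z ^ N"] av_one[OF av]
  by (simp add: av_power[OF av] power_le_one av_nonneg[OF av])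

lemma psi_unit: "av z = 1 \<Longrightarrow> av (psi N z) \<le> av p"
  unfolding psi_def using ferm[of z] disc av_diff_comm[OF av, of 1 "z ^ N"] by simp

lemma D_int: "av y \<le> 1 \<Longrightarrow> av (Dfun N p s y) \<le> 1"
proof (induction s arbitrary: y)
  case 0 then show ?case by (simp add: av_one[OF av])
next
  case (Suc s)
  have "av (psi N y) \<le> 1" using psi_int Suc by simp
  moreover have "av (Dfun N p s (phi N p y)) \<le> 1" using Suc phi_int by simp
  ultimately show ?case by (simp add: av_mult[OF av] mult_le_one av_nonneg[OF av])
qed

lemma D_small: "av y \<le> 1 \<Longrightarrow> av y > av p ^ s \<Longrightarrow> av (Dfun N p s y) \<le> av p"
proof (induction s arbitrary: y)
  case 0 then show ?case by simp
next
  case (Suc s)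
  show ?case
  proof (cases "av y < 1")
    case True
    have "av (phi N p y) = av y / av p" using phi_small[OF True] .
    moreover have "av y / av p > av p ^ s" using Suc(3) p by (simp add: field_simps)
    ultimately have "av (Dfun N p s (phi N p y)) \<le> av p" using Suc(1) phi_int[OF Suc(2)] by simp
    moreover have "av (psi N y) \<le> 1" using psi_int Suc by simp
    ultimately have "av (psi N y) * av (Dfun N p s (phi N p y)) \<le> 1 * av p"
      by (intro mult_mono) (auto simp: av_nonneg[OF av])
    then show ?thesis by (simp add: av_mult[OF av])
  next
    case False
    then have y1: "av y = 1" using Suc by simp
    have "av (psi N y) \<le> av p" using psi_unit[OF y1] .
    moreover have "av (Dfun N p s (phi N p y)) \<le> 1" using D_int phi_int Suc by simp
    ultimately have "av (psi N y) * av (Dfun N p s (phi N p y)) \<le> av p * 1"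
      by (intro mult_mono) (auto simp: av_nonneg[OF av] less_imp_le p)
    then show ?thesis by (simp add: av_mult[OF av])
  qed
qed

end



lemma disc_from:
  assumes av: "nonarch_absval av" and p: "0 < av p" "av p < 1"
    and k: "\<forall>x. x \<noteq> 0 \<longrightarrow> (\<exists>k::int. av x = av p powi k)"
    and x: "av x < 1"
  shows "av x \<le> av p"
proof (cases "x = 0")
  case True then show ?thesis using av_zero[OF av] p by simp
next
  case False
  then obtain k :: int where kx: "av x = av p powi k" using k by blast
  show ?thesis
  proof (cases "k \<ge> 1")
    case True
    then have "av x = av p ^ nat k" using kx by (simp add: power_int_def)
    also have "\<dots> \<le> av p ^ 1" using True p by (intro power_decreasing) auto
    finally show ?thesis by simp
  next
    case False
    then have "av x = inverse (av p) ^ nat (- k)" using kx by (auto simp: power_int_def)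
    moreover have "inverse (av p) \<ge> 1" using p by (simp add: one_le_inverse)
    ultimately have "av x \<ge> 1" by (simp add: one_le_power)
    then show ?thesis using x by simp
  qed
qed

lemma av_pow_near_one:
  assumes av: "nonarch_absval av" and w: "av (w - 1) < 1"
  shows "av (w ^ m - 1) < 1"
proof (induction m)
  case 0 then show ?case by (simp add: av_zero[OF av])
next
  case (Suc m)
  have w1: "av w = 1"
  proof -
    have "av (1 + (w - 1)) = av 1" using av_strict[OF av, of "w - 1" 1] w av_one[OF av] by simp
    then show ?thesis using av_one[OF av] by simp
  qed
  have e: "w ^ Suc m - 1 = w ^ m * (w - 1) + (w ^ m - 1)" by (simp add: algebra_simps)
  have "av (w ^ m * (w - 1)) < 1" using w w1 by (simp add: av_mult[OF av] av_power[OF av])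
  then have "av (w ^ m * (w - 1) + (w ^ m - 1)) < 1"
    using av_add[OF av, of "w ^ m * (w - 1)" "w ^ m - 1"] Suc by simp
  then show ?case by (simp only: e)
qed

lemma fermat_from:
  assumes av: "nonarch_absval av"
    and fin: "finite ({x. av x \<le> 1} // {(x, y). av (x - y) < 1})"
  shows "\<exists>N\<ge>1. \<forall>z. av z = 1 \<longrightarrow> av (z ^ N - 1) < 1"
proof -
  let ?Q = "{x. av x \<le> 1} // {(x, y). av (x - y) < 1}"
  let ?r = "{(x, y). av (x - y) < 1}"
  define c where "c = card ?Q"
  have dz: "\<exists>d. 1 \<le> d \<and> d \<le> c \<and> av (z ^ d - 1) < 1" if z: "av z = 1" for z
  proof -
    let ?f = "\<lambda>i. ?r `` {z ^ i}"
    have sub: "?f ` {0..c} \<subseteq> ?Q"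
    proof
      fix X assume "X \<in> ?f ` {0..c}"
      then obtain i where "X = ?f i" by auto
      moreover have "z ^ i \<in> {x. av x \<le> 1}" using z by (simp add: av_power[OF av])
      ultimately show "X \<in> ?Q" using quotientI[of "z ^ i" "{x. av x \<le> 1}" ?r] by simp
    qed
    then have "card (?f ` {0..c}) \<le> c" unfolding c_def using fin card_mono by blast
    then have "card {0..c} > card (?f ` {0..c})" by simp
    then have "\<not> inj_on ?f {0..c}" by (rule pigeonhole)
    then obtain i k where ik: "i \<in> {0..c}" "k \<in> {0..c}" "i \<noteq> k" "?f i = ?f k"
      unfolding inj_on_def by blast
    have gen: "av (z ^ (k' - i') - 1) < 1" if "i' < k'" "?f i' = ?f k'" for i' k'
    proof -
      have "z ^ k' \<in> ?f k'" by (simp add: av_zero[OF av])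
      then have "z ^ k' \<in> ?f i'" using that by simp
      then have "av (z ^ i' - z ^ k') < 1" by simp
      moreover have "z ^ k' = z ^ i' * z ^ (k' - i')"
        using that(1) by (simp add: power_add[symmetric])
      then have "z ^ i' - z ^ k' = - (z ^ i' * (z ^ (k' - i') - 1))"
        by (simp add: algebra_simps)
      ultimately show ?thesis using z by (simp add: av_uminus[OF av] av_mult[OF av] av_power[OF av])
    qed
    show ?thesis
    proof (cases "i < k")
      case True
      then show ?thesis using gen[OF True ik(4)] ik by (intro exI[of _ "k - i"]) auto
    next
      case False
      then have "k < i" using ik by simp
      then show ?thesis using gen[OF \<open>k < i\<close> ik(4)[symmetric]] ik by (intro exI[of _ "i - k"]) auto
    qed
  qed
  have "\<forall>z. av z = 1 \<longrightarrow> av (z ^ fact c - 1) < 1"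
  proof (intro allI impI)
    fix z assume z: "av z = 1"
    obtain d where d: "1 \<le> d" "d \<le> c" "av (z ^ d - 1) < 1" using dz[OF z] by blast
    have "d dvd fact c" using d by (simp add: dvd_fact)
    then obtain m where "fact c = d * m" by blast
    then have "z ^ fact c = (z ^ d) ^ m" by (simp add: power_mult)
    then show "av (z ^ fact c - 1) < 1" using av_pow_near_one[OF av d(3)] by simp
  qed
  moreover have "(1::nat) \<le> fact c" by (simp add: fact_ge_1)
  ultimately show ?thesis by blast
qed




lemma measure_dec:
  assumes "m \<in> multiidx b" "\<forall>j. m j \<le> n j" "m \<noteq> (\<lambda>_. 0)"
  shows "(\<Sum>j<b. n j - m j) < (\<Sum>j<b. n j)"
proof -
  have "\<exists>j. m j \<noteq> 0"
  proof (rule ccontr)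
    assume "\<not> (\<exists>j. m j \<noteq> 0)"
    then have "m = (\<lambda>_. 0)" by auto
    then show False using assms(3) by simp
  qed
  then obtain j where j: "m j \<noteq> 0" by blast
  have "j < b"
  proof (rule ccontr)
    assume "\<not> j < b"
    then have "m j = 0" using assms(1) unfolding multiidx_def by simp
    then show False using j by simp
  qed
  show ?thesis
  proof (rule sum_strict_mono_ex1)
    have "m j \<le> n j" using assms(2) by blast
    then have "n j - m j < n j" using j by arith
    then show "\<exists>a\<in>{..<b}. n a - m a < n a" using \<open>j < b\<close> by blast
  qed auto
qed

function vinv :: "nat \<Rightarrow> ((nat \<Rightarrow> nat) \<Rightarrow> 'e::field) \<Rightarrow> (nat \<Rightarrow> nat) \<Rightarrow> 'e" where
  "vinv b u n = (if n \<notin> multiidx b then 0 else if n = (\<lambda>_. 0) then 1 else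
     - (\<Sum>m \<in> {m \<in> multiidx b. (\<forall>j. m j \<le> n j) \<and> m \<noteq> (\<lambda>_. 0)}. u m * vinv b u (\<lambda>j. n j - m j)))"
  by auto
termination
proof (relation "measure (\<lambda>(b, u, n). \<Sum>j<b. n j)", simp)
  fix b :: nat and u :: "(nat \<Rightarrow> nat) \<Rightarrow> 'e" and n m :: "nat \<Rightarrow> nat"
  assume n: "\<not> n \<notin> multiidx b" "n \<noteq> (\<lambda>_. 0)"
    and m: "m \<in> {m \<in> multiidx b. (\<forall>j. m j \<le> n j) \<and> m \<noteq> (\<lambda>_. 0)}"
  have "(\<Sum>j<b. n j - m j) < (\<Sum>j<b. n j)" using measure_dec m by blast
  then show "((b, u, \<lambda>j. n j - m j), b, u, n) \<in> measure (\<lambda>(b, u, n). \<Sum>j<b. n j)" by simp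
qed

declare vinv.simps[simp del]

primrec sumset :: "(nat \<Rightarrow> nat) set \<Rightarrow> nat \<Rightarrow> (nat \<Rightarrow> nat) set" where
  "sumset F 0 = {}"
| "sumset F (Suc j) = insert (\<lambda>_. 0) ((\<lambda>(m, k). \<lambda>i. m i + k i) ` (F \<times> sumset F j))"

lemma sumset_finite: "finite F \<Longrightarrow> finite (sumset F j)"
  by (induction j) auto

lemma vinv_out: "n \<notin> multiidx b \<Longrightarrow> vinv b u n = 0"
  by (subst vinv.simps) simp

lemma vinv_bound1:
  assumes av: "nonarch_absval av" and u: "\<forall>n. n \<noteq> (\<lambda>_. 0) \<longrightarrow> av (u n) < 1"
  shows "av (vinv b u n) \<le> 1"
proof (induction "\<Sum>j<b. n j" arbitrary: n rule: less_induct)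
  case less
  show ?case
  proof (cases "n \<notin> multiidx b \<or> n = (\<lambda>_. 0)")
    case True
    then show ?thesis by (subst vinv.simps) (auto simp: av_zero[OF av] av_one[OF av])
  next
    case False
    let ?A = "{m \<in> multiidx b. (\<forall>j. m j \<le> n j) \<and> m \<noteq> (\<lambda>_. 0)}"
    have "av (\<Sum>m \<in> ?A. u m * vinv b u (\<lambda>j. n j - m j)) \<le> 1"
    proof (rule av_sum_le[OF av])
      fix m assume m: "m \<in> ?A"
      have "av (vinv b u (\<lambda>j. n j - m j)) \<le> 1" using less measure_dec m by blast
      moreover have "av (u m) \<le> 1" using u m less_imp_le by blast
      ultimately show "av (u m * vinv b u (\<lambda>j. n j - m j)) \<le> 1"
        by (simp add: av_mult[OF av] mult_le_one av_nonneg[OF av])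
    qed simp
    then show ?thesis using False by (subst vinv.simps) (simp add: av_uminus[OF av])
  qed
qed




lemma vinv_claim:
  assumes av: "nonarch_absval av" and u: "\<forall>n. n \<noteq> (\<lambda>_. 0) \<longrightarrow> av (u n) < 1"
    and rho: "0 \<le> \<rho>" "\<rho> \<le> 1" "\<forall>n. n \<noteq> (\<lambda>_. 0) \<longrightarrow> av (u n) \<le> \<rho>"
    and tau: "0 \<le> \<tau>"
    and F: "F = {m \<in> multiidx b. m \<noteq> (\<lambda>_. 0) \<and> \<tau> \<le> av (u m)}"
  shows "\<forall>n. n \<notin> sumset F j \<longrightarrow> av (vinv b u n) \<le> max \<tau> (\<rho> ^ j)"
proof (induction j)
  case 0
  then show ?case using vinv_bound1[OF av u] by (simp add: le_max_iff_disj)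
next
  case (Suc j)
  show ?case
  proof (intro allI impI)
    fix n assume n: "n \<notin> sumset F (Suc j)"
    show "av (vinv b u n) \<le> max \<tau> (\<rho> ^ Suc j)"
    proof (cases "n \<notin> multiidx b")
      case True
      then show ?thesis using vinv_out[OF True, of u] av_zero[OF av] tau by (simp add: le_max_iff_disj)
    next
      case False
      have n0: "n \<noteq> (\<lambda>_. 0)" using n by auto
      let ?A = "{m \<in> multiidx b. (\<forall>j. m j \<le> n j) \<and> m \<noteq> (\<lambda>_. 0)}"
      have "av (\<Sum>m \<in> ?A. u m * vinv b u (\<lambda>j. n j - m j)) \<le> max \<tau> (\<rho> ^ Suc j)"
      proof (rule av_sum_le[OF av])
        fix m assume m: "m \<in> ?A"
        show "av (u m * vinv b u (\<lambda>j. n j - m j)) \<le> max \<tau> (\<rho> ^ Suc j)"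
        proof (cases "\<tau> \<le> av (u m)")
          case True
          then have mF: "m \<in> F" using m F by auto
          have "n = (\<lambda>i. m i + (\<lambda>j. n j - m j) i)" using m by (auto simp: fun_eq_iff)
          then have "(\<lambda>j. n j - m j) \<notin> sumset F j"
            using n mF by (auto simp: image_iff) 
          then have v: "av (vinv b u (\<lambda>j. n j - m j)) \<le> max \<tau> (\<rho> ^ j)" using Suc by blast
          have um: "av (u m) \<le> \<rho>" using rho m by auto
          have "av (u m) * av (vinv b u (\<lambda>j. n j - m j)) \<le> \<rho> * max \<tau> (\<rho> ^ j)"
            using um v by (intro mult_mono) (auto simp: av_nonneg[OF av] rho tau)
          also have "\<dots> \<le> max \<tau> (\<rho> ^ Suc j)"
          proof (cases "\<tau> \<le> \<rho> ^ j")
            case True then show ?thesis by simp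
          next
            case False
            then have "\<rho> * max \<tau> (\<rho> ^ j) = \<rho> * \<tau>" by simp
            also have "\<dots> \<le> \<tau>" using rho tau by (simp add: mult_left_le_one_le)
            finally show ?thesis by simp
          qed
          finally show ?thesis by (simp add: av_mult[OF av])
        next
          case False
          have "av (vinv b u (\<lambda>j. n j - m j)) \<le> 1" using vinv_bound1[OF av u] .
          then have "av (u m) * av (vinv b u (\<lambda>j. n j - m j)) \<le> \<tau> * 1"
            using False by (intro mult_mono) (auto simp: av_nonneg[OF av] tau)
          then show ?thesis by (simp add: av_mult[OF av])
        qed
      qed (simp add: tau le_max_iff_disj)
      then show ?thesis using False n0 by (subst vinv.simps) (simp add: av_uminus[OF av])
    qed
  qed
qed

lemma unit_inverse:
  assumes av: "nonarch_absval av" and ut: "u \<in> tate av b" and u0: "u (\<lambda>_. 0) = 1"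
    and u: "\<forall>n. n \<noteq> (\<lambda>_. 0) \<longrightarrow> av (u n) < 1"
  shows "vinv b u \<in> tate av b" "tmult b u (vinv b u) = tone"
proof -
  let ?S = "{n \<in> multiidx b. 1/2 \<le> av (u n)}"
  have "\<forall>\<epsilon>>0. finite {n \<in> multiidx b. \<epsilon> \<le> av (u n)}" using ut unfolding tate_def by blast
  then have finS: "finite ?S" by (metis half_gt_zero zero_less_one)
  define \<rho> where "\<rho> = Max (insert (1/2) ((\<lambda>n. av (u n)) ` (?S - {\<lambda>_. 0})))"
  have rho1: "\<rho> < 1" unfolding \<rho>_def using finS u by (subst Max_less_iff) auto
  have rho0: "0 \<le> \<rho>" unfolding \<rho>_def using finS by (meson Max_ge finite_Diff finite_imageI finite_insert insertI1 linorder_not_le not_less_iff_gr_or_eq order_less_le_trans zero_less_divide_1_iff zero_less_numeral)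
  have rhou: "\<forall>n. n \<noteq> (\<lambda>_. 0) \<longrightarrow> av (u n) \<le> \<rho>"
  proof (intro allI impI)
    fix n :: "nat \<Rightarrow> nat" assume n: "n \<noteq> (\<lambda>_. 0)"
    show "av (u n) \<le> \<rho>"
    proof (cases "n \<in> ?S")
      case True then show ?thesis unfolding \<rho>_def using finS n by (intro Max_ge) auto
    next
      case False
      then have "av (u n) < 1/2" using ut av_zero[OF av] unfolding tate_def by (cases "n \<in> multiidx b") auto
      moreover have "1/2 \<le> \<rho>" unfolding \<rho>_def using finS by (intro Max_ge) auto
      ultimately show ?thesis by simp
    qed
  qed
  show "vinv b u \<in> tate av b"
    unfolding tate_def
  proof (safe)
    fix n assume "n \<notin> multiidx b" then show "vinv b u n = 0" by (rule vinv_out)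
  next
    fix \<epsilon> :: real assume e: "\<epsilon> > 0"
    obtain j where j: "\<rho> ^ j < \<epsilon>" using real_arch_pow_inv[OF e rho1] by blast
    define F where "F = {m \<in> multiidx b. m \<noteq> (\<lambda>_. 0) \<and> \<epsilon>/2 \<le> av (u m)}"
    have finF: "finite F"
    proof -
      have "F \<subseteq> {m \<in> multiidx b. \<epsilon>/2 \<le> av (u m)}" unfolding F_def by auto
      moreover have "\<forall>\<epsilon>>0. finite {n \<in> multiidx b. \<epsilon> \<le> av (u n)}" using ut unfolding tate_def by blast
      then have "finite {m \<in> multiidx b. \<epsilon>/2 \<le> av (u m)}" using e by (metis half_gt_zero)
      ultimately show ?thesis by (rule finite_subset)
    qed
    have cl: "\<forall>n. n \<notin> sumset F j \<longrightarrow> av (vinv b u n) \<le> max (\<epsilon>/2) (\<rho> ^ j)"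
      by (rule vinv_claim[OF av u rho0 _ rhou _ F_def]) (use rho1 e in auto)
    have "{n \<in> multiidx b. \<epsilon> \<le> av (vinv b u n)} \<subseteq> sumset F j"
    proof
      fix n assume "n \<in> {n \<in> multiidx b. \<epsilon> \<le> av (vinv b u n)}"
      then have "\<epsilon> \<le> av (vinv b u n)" by simp
      moreover have "max (\<epsilon>/2) (\<rho> ^ j) < \<epsilon>" using j e by simp
      ultimately show "n \<in> sumset F j" using cl by force
    qed
    then show "finite {n \<in> multiidx b. \<epsilon> \<le> av (vinv b u n)}"
      using sumset_finite[OF finF] finite_subset by blast
  qed
  show "tmult b u (vinv b u) = tone"
  proof
    fix n
    show "tmult b u (vinv b u) n = tone n"
    proof (cases "n \<in> multiidx b")
      case False
      have "n \<noteq> (\<lambda>_. 0)" using False by auto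
      moreover have "vinv b u (\<lambda>j. n j - m j) = 0" if "m \<in> multiidx b" for m
      proof -
        obtain j where "j \<ge> b" "n j \<noteq> 0" using False unfolding multiidx_def by auto
        then have "(\<lambda>j. n j - m j) \<notin> multiidx b" using that unfolding multiidx_def by auto
        then show ?thesis by (rule vinv_out)
      qed
      ultimately show ?thesis unfolding tmult_def tone_def by simp
    next
      case True
      let ?A = "{m \<in> multiidx b. (\<forall>j. m j \<le> n j) \<and> m \<noteq> (\<lambda>_. 0)}"
      have AA: "{m \<in> multiidx b. \<forall>j. m j \<le> n j} = insert (\<lambda>_. 0) ?A" by auto
      have finA: "finite ?A" using fin_le[of b n] by (rule finite_subset[rotated]) auto
      have "tmult b u (vinv b u) n = u (\<lambda>_. 0) * vinv b u n + (\<Sum>m\<in>?A. u m * vinv b u (\<lambda>j. n j - m j))"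
        unfolding tmult_def AA using finA by (subst sum.insert) auto
      also have "\<dots> = tone n"
      proof (cases "n = (\<lambda>_. 0)")
        case True
        then have "?A = {}" by (auto simp: fun_eq_iff)
        then have s0: "(\<Sum>m\<in>?A. u m * vinv b u (\<lambda>j. n j - m j)) = 0" by (simp only: sum.empty)
        have "vinv b u n = 1" using \<open>n = (\<lambda>_. 0)\<close> by (subst vinv.simps) simp
        then show ?thesis using s0 u0 \<open>n = (\<lambda>_. 0)\<close> by (simp add: tone_def)
      next
        case False
        have "vinv b u n = - (\<Sum>m\<in>?A. u m * vinv b u (\<lambda>j. n j - m j))"
          using False True by (subst vinv.simps) simp
        then show ?thesis using False u0 by (simp add: tone_def)
      qed
      finally show ?thesis .
    qed
  qed
qed




lemma tmult_mon_left:
  assumes "m \<in> multiidx b"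
  shows "tmult b (mon m) g n = (if \<forall>i. m i \<le> n i then g (\<lambda>i. n i - m i) else 0)"
proof -
  have "tmult b (mon m) g n = (\<Sum>m'\<in>{m' \<in> multiidx b. \<forall>j. m' j \<le> n j}. (if m' = m then g (\<lambda>j. n j - m' j) else 0))"
    unfolding tmult_def by (intro sum.cong) (auto simp: mon_def)
  also have "\<dots> = (if m \<in> {m' \<in> multiidx b. \<forall>j. m' j \<le> n j} then g (\<lambda>j. n j - m j) else 0)"
    using fin_le by (subst sum_delta_fun) auto
  finally show ?thesis using assms by simp
qed

definition gpart :: "nat \<Rightarrow> nat \<Rightarrow> ((nat \<Rightarrow> nat) \<Rightarrow> 'e::field) \<Rightarrow> (nat \<Rightarrow> nat) \<Rightarrow> 'e" where
  "gpart b j f = (\<lambda>k. if k \<in> multiidx b \<and> (\<forall>i<j. k i = 0) then f (\<lambda>i. k i + ej j i) else 0)"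

lemma gpart_tate:
  assumes av: "nonarch_absval av" and f: "f \<in> tate av b" and j: "j < b"
  shows "gpart b j f \<in> tate av b"
  unfolding tate_def
proof (safe)
  fix n assume "n \<notin> multiidx b" then show "gpart b j f n = 0" by (simp add: gpart_def)
next
  fix \<epsilon> :: real assume e: "\<epsilon> > 0"
  have "{k \<in> multiidx b. \<epsilon> \<le> av (gpart b j f k)} \<subseteq> (\<lambda>n i. n i - ej j i) ` {n \<in> multiidx b. \<epsilon> \<le> av (f n)}"
  proof
    fix k assume k: "k \<in> {k \<in> multiidx b. \<epsilon> \<le> av (gpart b j f k)}"
    then have c: "k \<in> multiidx b" "\<forall>i<j. k i = 0" "\<epsilon> \<le> av (f (\<lambda>i. k i + ej j i))"
      using e av_zero[OF av] unfolding gpart_def by (auto split: if_splits)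
    have "(\<lambda>i. k i + ej j i) \<in> multiidx b" using c(1) j unfolding multiidx_def ej_def by auto
    moreover have "k = (\<lambda>i. (\<lambda>i. k i + ej j i) i - ej j i)" by simp
    ultimately show "k \<in> (\<lambda>n i. n i - ej j i) ` {n \<in> multiidx b. \<epsilon> \<le> av (f n)}"
      using c(3) by (intro image_eqI[of _ _ "\<lambda>i. k i + ej j i"]) auto
  qed
  moreover have "finite {n \<in> multiidx b. \<epsilon> \<le> av (f n)}" using f e unfolding tate_def by auto
  ultimately show "finite {k \<in> multiidx b. \<epsilon> \<le> av (gpart b j f k)}"
    using finite_subset by blast
qed

lemma term_val:
  assumes j: "j < b"
  shows "tmult b (Tvar j) (gpart b j f) n =
    (if 1 \<le> n j \<and> (\<lambda>i. n i - ej j i) \<in> multiidx b \<and> (\<forall>i<j. n i = 0) then f n else 0)"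
proof -
  have "tmult b (Tvar j) (gpart b j f) n = (if \<forall>i. ej j i \<le> n i then gpart b j f (\<lambda>i. n i - ej j i) else 0)"
    unfolding Tvar_mon by (rule tmult_mon_left[OF ej_multiidx[OF j]])
  moreover have "(\<forall>i. ej j i \<le> n i) \<longleftrightarrow> 1 \<le> n j" unfolding ej_def by auto
  moreover have "1 \<le> n j \<Longrightarrow> (\<lambda>i. (\<lambda>i. n i - ej j i) i + ej j i) = n" unfolding ej_def by auto
  moreover have "1 \<le> n j \<Longrightarrow> (\<forall>i<j. n i - ej j i = 0) \<longleftrightarrow> (\<forall>i<j. n i = 0)" unfolding ej_def by auto
  ultimately show ?thesis unfolding gpart_def by auto
qed

lemma sum_terms:
  assumes f: "f \<in> tate av b" and f0: "f (\<lambda>_. 0) = 0"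
  shows "(\<lambda>n. \<Sum>j<b. tmult b (Tvar j) (gpart b j f) n) = f"
proof
  fix n
  show "(\<Sum>j<b. tmult b (Tvar j) (gpart b j f) n) = f n"
  proof (cases "n \<in> multiidx b")
    case False
    have "(\<lambda>i. n i - ej j i) \<notin> multiidx b" if "j < b" for j
    proof -
      obtain i where "i \<ge> b" "n i \<noteq> 0" using False unfolding multiidx_def by auto
      then show ?thesis using that unfolding multiidx_def ej_def by auto
    qed
    moreover have "f n = 0" using f False unfolding tate_def by auto
    ultimately show ?thesis by (simp add: term_val)
  next
    case True
    show ?thesis
    proof (cases "n = (\<lambda>_. 0)")
      case True
      then show ?thesis using f0 by (simp add: term_val)
    next
      case False
      then have ex: "\<exists>i. n i \<noteq> 0" by auto
      define j0 where "j0 = (LEAST i. n i \<noteq> 0)"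
      have j0: "n j0 \<noteq> 0" unfolding j0_def using ex by (rule LeastI_ex)
      have j0b: "j0 < b"
      proof (rule ccontr)
        assume "\<not> j0 < b"
        then have "n j0 = 0" using True unfolding multiidx_def by simp
        then show False using j0 by simp
      qed
      have bef: "\<forall>i<j0. n i = 0" unfolding j0_def using not_less_Least by blast
      have eq: "tmult b (Tvar j) (gpart b j f) n = (if j = j0 then f n else 0)" if "j < b" for j
      proof -
        have nm: "(\<lambda>i. n i - ej j i) \<in> multiidx b" using True unfolding multiidx_def by auto
        have "(1 \<le> n j \<and> (\<forall>i<j. n i = 0)) \<longleftrightarrow> j = j0"
        proof
          assume a: "1 \<le> n j \<and> (\<forall>i<j. n i = 0)"
          have "j0 \<le> j" unfolding j0_def using a by (intro Least_le) simp
          moreover have "\<not> j0 < j" using a j0 by auto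
          ultimately show "j = j0" by simp
        next
          assume "j = j0" then show "1 \<le> n j \<and> (\<forall>i<j. n i = 0)" using j0 bef by auto
        qed
        then have iff: "(1 \<le> n j \<and> (\<lambda>i. n i - ej j i) \<in> multiidx b \<and> (\<forall>i<j. n i = 0)) \<longleftrightarrow> j = j0"
          using nm by blast
        have tv: "tmult b (Tvar j) (gpart b j f) n =
          (if 1 \<le> n j \<and> (\<lambda>i. n i - ej j i) \<in> multiidx b \<and> (\<forall>i<j. n i = 0) then f n else 0)"
          by (rule term_val[OF that])
        show ?thesis by (simp only: tv iff)
      qed
      have "(\<Sum>j<b. tmult b (Tvar j) (gpart b j f) n) = (\<Sum>j<b. if j = j0 then f n else 0)"
        using eq by (intro sum.cong) auto
      also have "\<dots> = f n" using j0b by simp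
      finally show ?thesis .
    qed
  qed
qed

lemma notM_const:
  assumes av: "nonarch_absval av" and R: "ring (tate_ring av b)"
    and f: "f \<in> tate av b" and f0: "f (\<lambda>_. 0) = 0"
  shows "f \<in> genideal (tate_ring av b) {Tvar j | j. j < b}"
proof -
  let ?R = "tate_ring av b"
  let ?G = "genideal ?R {Tvar j | j. j < b}"
  have Sc: "{Tvar j | j. j < b} \<subseteq> carrier ?R"
    using mon_tate[OF av ej_multiidx] by (auto simp: Tvar_mon)
  have G: "ideal ?G ?R" by (rule ring.genideal_ideal[OF R Sc])
  have TG: "Tvar j \<in> ?G" if "j < b" for j using ring.genideal_self[OF R Sc] that by blast
  have "A \<subseteq> {..<b} \<Longrightarrow> (\<lambda>n. \<Sum>j\<in>A. tmult b (Tvar j) (gpart b j f) n) \<in> ?G" for A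
  proof (induction A rule: infinite_finite_induct)
    case (infinite A)
    then show ?case using finite_subset by blast
  next
    case empty
    then show ?case using additive_subgroup.zero_closed[OF ideal.axioms(1)[OF G]] by simp
  next
    case (insert a A)
    have ab: "a < b" using insert.prems by auto
    have gc: "gpart b a f \<in> carrier ?R" using gpart_tate[OF av f ab] by simp
    have "mult ?R (Tvar a) (gpart b a f) \<in> ?G"
      by (rule ideal.I_r_closed[OF G TG[OF ab] gc])
    then have "add ?R (tmult b (Tvar a) (gpart b a f)) (\<lambda>n. \<Sum>j\<in>A. tmult b (Tvar j) (gpart b j f) n) \<in> ?G"
      using additive_subgroup.a_closed[OF ideal.axioms(1)[OF G]] insert by simp
    then show ?case using insert by simp
  qed
  then have "(\<lambda>n. \<Sum>j<b. tmult b (Tvar j) (gpart b j f) n) \<in> ?G" by blast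
  then show ?thesis using sum_terms[OF f f0] by simp
qed




theorem proposition2p1:
  fixes l :: nat and av :: "'e::field \<Rightarrow> real" and b :: nat
    and \<alpha> :: "nat \<Rightarrow> 'e" and \<sigma> :: "((nat \<Rightarrow> nat) \<Rightarrow> 'e) \<Rightarrow> ((nat \<Rightarrow> nat) \<Rightarrow> 'e)"
    and I :: "((nat \<Rightarrow> nat) \<Rightarrow> 'e) set"
  assumes E: "l_adic_local_field l av"
    and alpha_int: "\<forall>j<b. av (\<alpha> j) \<le> 1"
    and sigma: "cont_E_alg_endo av b \<sigma>"
    and sigma_T: "\<forall>j<b. \<sigma> (Tvar j) = (\<lambda>n. \<alpha> j * Tvar j n)"
    and nonres: "\<forall>n \<in> multiidx b. n \<noteq> (\<lambda>_. 0) \<longrightarrow> (\<Prod>j<b. \<alpha> j ^ n j) \<noteq> 1"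
    and I: "ideal I (tate_ring av b)"
    and stable: "\<sigma> ` I \<subseteq> I"
    and notM: "\<not> I \<subseteq> genideal (tate_ring av b) {Tvar j | j. j < b}"
  shows "I = carrier (tate_ring av b)"
proof -
  let ?R = "tate_ring av b"
  have av: "nonarch_absval av" using E unfolding l_adic_local_field_def by simp
  obtain p where p1: "0 < av p" and p2: "av p < 1"
    and pk: "\<forall>x. x \<noteq> 0 \<longrightarrow> (\<exists>k::int. av x = av p powi k)"
    using E unfolding l_adic_local_field_def by blast
  have fin: "finite ({x. av x \<le> 1} // {(x, y). av (x - y) < 1})"
    using E unfolding l_adic_local_field_def by blast
  have disc: "\<And>x. av x < 1 \<Longrightarrow> av x \<le> av p" using disc_from[OF av p1 p2 pk] by blast
  obtain N where N: "N \<ge> 1" and ferm: "\<And>z. av z = 1 \<Longrightarrow> av (z ^ N - 1) < 1"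
    using fermat_from[OF av fin] by blast
  have R: "ring ?R" using I by (rule ideal.axioms(2))
  have Isub: "I \<subseteq> tate av b" using additive_subgroup.a_subset[OF ideal.axioms(1)[OF I]] by simp
  have diag: "\<forall>g \<in> tate av b. \<sigma> g = (\<lambda>k. apow \<alpha> b k * g k)"
    using sig_diag[OF av R sigma sigma_T alpha_int] by blast
  have good: "\<And>q g. pf q \<Longrightarrow> g \<in> I \<Longrightarrow> (\<lambda>n. q (apow \<alpha> b n) * g n) \<in> I"
    using pf_good[OF av I stable diag] by blast
  obtain f where fI: "f \<in> I" and fG: "f \<notin> genideal ?R {Tvar j | j. j < b}" using notM by blast
  have ft: "f \<in> tate av b" using fI Isub by blast
  have f0: "f (\<lambda>_. 0) \<noteq> 0" using notM_const[OF av R ft] fG by blast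
  define f' where "f' = (\<lambda>n. inverse (f (\<lambda>_. 0)) * f n)"
  have f'I: "f' \<in> I" unfolding f'_def using good[OF pf_const fI] by simp
  have f't: "f' \<in> tate av b" using f'I Isub by blast
  have f'0: "f' (\<lambda>_. 0) = 1" unfolding f'_def using f0 by simp
  obtain B where B: "B \<ge> 1" "\<forall>n. av (f' n) \<le> B" using tate_bounded[OF av f't] by blast
  obtain M where M: "av p ^ M < 1 / B" using real_arch_pow_inv[of "1/B" "av p"] B p2 by auto
  have MB: "av p ^ M * B < 1" using M B by (simp add: field_simps)
  define F where "F = {n \<in> multiidx b. n \<noteq> (\<lambda>_. 0) \<and> 1 \<le> av (f' n)}"
  have finF: "finite F"
  proof -
    have "\<forall>\<epsilon>>0. finite {n \<in> multiidx b. \<epsilon> \<le> av (f' n)}" using f't unfolding tate_def by blast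
    then have "finite {n \<in> multiidx b. 1 \<le> av (f' n)}" by simp
    then show ?thesis unfolding F_def by (rule finite_subset[rotated]) auto
  qed
  have Fpos: "av (apow \<alpha> b n - 1) > 0" if "n \<in> F" for n
  proof -
    have "apow \<alpha> b n \<noteq> 1" using nonres that unfolding F_def apow_def by auto
    then show ?thesis using av_zero_iff[OF av] av_nonneg[OF av] by (metis eq_iff_diff_eq_0 less_eq_real_def)
  qed
  obtain s where s: "\<forall>n\<in>F. av p ^ s < av (apow \<alpha> b n - 1)"
  proof (cases "F = {}")
    case True then show ?thesis using that by blast
  next
    case False
    define m0 where "m0 = Min ((\<lambda>n. av (apow \<alpha> b n - 1)) ` F)"
    have m0: "m0 > 0" unfolding m0_def using finF False Fpos by (subst Min_gr_iff) auto
    obtain s where "av p ^ s < m0" using real_arch_pow_inv[OF m0 p2] by blast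
    moreover have "\<forall>n\<in>F. m0 \<le> av (apow \<alpha> b n - 1)" unfolding m0_def using finF by auto
    ultimately have "\<forall>n\<in>F. av p ^ s < av (apow \<alpha> b n - 1)" by (meson less_le_trans)
    then show ?thesis by (rule that)
  qed
  define Q where "Q = (\<lambda>x. Dfun N p s (x - 1) ^ M)"
  have pfQ: "pf Q" unfolding Q_def
    by (intro pf_power pf_comp[OF pf_D] pf_diff pf_id pf_const)
  define u where "u = (\<lambda>n. Q (apow \<alpha> b n) * f' n)"
  have uI: "u \<in> I" unfolding u_def using good[OF pfQ f'I] .
  have ut: "u \<in> tate av b" using uI Isub by blast
  have u0: "u (\<lambda>_. 0) = 1" unfolding u_def Q_def using f'0 D_zero[OF N, of p s] by (simp add: apow_zero)
  have usmall: "\<forall>n. n \<noteq> (\<lambda>_. 0) \<longrightarrow> av (u n) < 1"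
  proof (intro allI impI)
    fix n :: "nat \<Rightarrow> nat" assume n0: "n \<noteq> (\<lambda>_. 0)"
    show "av (u n) < 1"
    proof (cases "n \<in> multiidx b")
      case False
      then have "f' n = 0" using f't unfolding tate_def by auto
      then show ?thesis unfolding u_def by (simp add: av_zero[OF av])
    next
      case True
      let ?y = "apow \<alpha> b n - 1"
      have y1: "av ?y \<le> 1"
        using av_diff[OF av, of "apow \<alpha> b n" 1] apow_int[OF av alpha_int, of n] av_one[OF av] by simp
      have Qle: "av (Q (apow \<alpha> b n)) \<le> 1"
        unfolding Q_def using D_int[OF av N p1 p2 disc ferm y1]
        by (simp add: av_power[OF av] power_le_one av_nonneg[OF av])
      show ?thesis
      proof (cases "n \<in> F")
        case True
        have "av ?y > av p ^ s" using s True by blast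
        then have "av (Dfun N p s ?y) \<le> av p" using D_small[OF av N p1 p2 disc ferm y1] by blast
        then have "av (Q (apow \<alpha> b n)) \<le> av p ^ M"
          unfolding Q_def by (simp add: av_power[OF av] power_mono av_nonneg[OF av])
        then have "av (u n) \<le> av p ^ M * B"
          unfolding u_def using B(2) by (simp add: av_mult[OF av] mult_mono av_nonneg[OF av] less_imp_le[OF p1])
        then show ?thesis using MB by simp
      next
        case False
        then have "av (f' n) < 1" using True n0 unfolding F_def by auto
        then have "av (Q (apow \<alpha> b n)) * av (f' n) < 1"
          using Qle av_nonneg[OF av] by (meson le_less_trans mult_left_le_one_le)
        then show ?thesis unfolding u_def by (simp add: av_mult[OF av])
      qed
    qed
  qed
  have vt: "vinv b u \<in> tate av b" and uv: "tmult b u (vinv b u) = tone"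
    using unit_inverse[OF av ut u0 usmall] by auto
  show ?thesis
  proof
    show "I \<subseteq> carrier ?R" using Isub by simp
  next
    show "carrier ?R \<subseteq> I"
    proof
      fix x assume x: "x \<in> carrier ?R"
      have vc: "vinv b u \<in> carrier ?R" using vt by simp
      have uc: "u \<in> carrier ?R" using ut by simp
      have "x = mult ?R (one ?R) x" using ring.ring_simprules(12)[OF R x] by simp
      also have "\<dots> = mult ?R (mult ?R u (vinv b u)) x" using uv by simp
      also have "\<dots> = mult ?R u (mult ?R (vinv b u) x)"
        using ring.ring_simprules(11)[OF R uc vc x] .
      finally have "x = mult ?R u (mult ?R (vinv b u) x)" .
      moreover have "mult ?R u (mult ?R (vinv b u) x) \<in> I"
        using ideal.I_r_closed[OF I uI ring.ring_simprules(5)[OF R vc x]] .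
      ultimately show "x \<in> I" by simp
    qed
  qed
qed



end
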